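(* For $0<\varepsilon\le 1/2$, let $G(\varepsilon;\eta)=-\dfrac{\varepsilon\Upsilon(\varepsilon^{1/2}\eta)}{1-\varepsilon\eta}$ for $\eta\ge0$ and let $W(\varepsilon;\eta)$ be defined by $G=-\partial_\eta W$, $W(\varepsilon;0)=0$. Then, with a constant $C$ independent of $\varepsilon$: (1) $W(\varepsilon;\cdot)$ is increasing and $0\le W(\varepsilon;\eta)\le1$ for all $\eta>0$; (2) $\lim_{\varepsilon\to0}W(\varepsilon;\infty)=0$; (3) $\int_0^\infty\big(e^{-W(\varepsilon;\eta)}-e^{-W(\varepsilon;\infty)}\big)^2\,d\eta\le C$; (4) $\int_0^\infty G^2(\varepsilon;\eta)\,d\eta\le C$; (5) $\int_0^\infty\int_\eta^\infty G^2(\varepsilon;y)\,dy\,d\eta\le C$.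
   Context: $\Upsilon\in C^\infty([0,\infty))$ is a cut-off function with $0\le\Upsilon\le1$, $\Upsilon(z)=1$ for $0\le z\le1/2$ and $\Upsilon(z)=0$ for $z\ge3/4$. $W(\varepsilon;\infty)=\lim_{\eta\to\infty}W(\varepsilon;\eta)$. *)

theory Defs
  imports "HOL-Analysis.Analysis"
begin

text \<open>C-infinity on a set S (one-sided derivatives at boundary points): there is a
  sequence of functions D with D 0 = f on S and D k having derivative D (k+1) within S.\<close>
definition smooth_within :: "real set \<Rightarrow> (real \<Rightarrow> real) \<Rightarrow> bool" where
  "smooth_within S f \<longleftrightarrow> (\<exists>D :: nat \<Rightarrow> real \<Rightarrow> real.
     (\<forall>x\<in>S. D 0 x = f x) \<and>
     (\<forall>k. \<forall>x\<in>S. (D k has_real_derivative D (Suc k) x) (at x within S)))"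

definition cutoff :: "(real \<Rightarrow> real) \<Rightarrow> bool" where
  "cutoff U \<longleftrightarrow> smooth_within {0..} U \<and>
     (\<forall>z\<ge>0. 0 \<le> U z \<and> U z \<le> 1) \<and>
     (\<forall>z. 0 \<le> z \<and> z \<le> 1/2 \<longrightarrow> U z = 1) \<and>
     (\<forall>z\<ge>3/4. U z = 0)"

definition Gfun :: "(real \<Rightarrow> real) \<Rightarrow> real \<Rightarrow> real \<Rightarrow> real" where
  "Gfun U \<epsilon> \<eta> = - (\<epsilon> * U (sqrt \<epsilon> * \<eta>)) / (1 - \<epsilon> * \<eta>)"

definition Winf :: "(real \<Rightarrow> real \<Rightarrow> real) \<Rightarrow> real \<Rightarrow> real" where
  "Winf W \<epsilon> = Lim at_top (W \<epsilon>)"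

end

theory Submission imports Defs begin

lemma deriv_incr:
  fixes f f' :: "real \<Rightarrow> real"
  assumes ab: "a \<le> b"
    and d: "\<And>x. a \<le> x \<Longrightarrow> x \<le> b \<Longrightarrow> (f has_real_derivative f' x) (at x within {a..b})"
    and p: "\<And>x. a < x \<Longrightarrow> x < b \<Longrightarrow> 0 \<le> f' x"
  shows "f a \<le> f b"
proof (rule DERIV_nonneg_imp_increasing_open[OF ab])
  fix x assume x: "a < x" "x < b"
  have "(f has_real_derivative f' x) (at x within {a<..<b})"
    using d[of x] x by (auto intro: DERIV_subset)
  then have "(f has_real_derivative f' x) (at x)"
    using at_within_open[of x "{a<..<b}"] x by simp
  then show "\<exists>y. (f has_real_derivative y) (at x) \<and> 0 \<le> y" using p x by blast
next
  show "continuous_on {a..b} f"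
    unfolding continuous_on_eq_continuous_within
    using d DERIV_continuous by fastforce
qed

lemma tail:
  fixes f :: "real \<Rightarrow> real"
  assumes "b \<le> a" "f integrable_on {b..a}" "\<And>x. a \<le> x \<Longrightarrow> f x = 0"
  shows "f integrable_on {b..} \<and> integral {b..} f = integral {b..a} f"
proof -
  have 1: "(f has_integral integral {b..a} f) {b..a}" using assms(2) by auto
  have 2: "(f has_integral 0) {a..}" using assms(3) by (intro has_integral_is_0) auto
  have "(f has_integral (integral {b..a} f + 0)) ({b..a} \<union> {a..})"
    by (rule has_integral_Un[OF 1 2]) (use assms(1) in auto)
  moreover have "{b..a} \<union> {a..} = {b..}" using assms(1) by auto
  ultimately have "(f has_integral integral {b..a} f) {b..}" by simp
  then show ?thesis by (auto simp: integral_unique)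
qed

lemma tail0:
  fixes f :: "real \<Rightarrow> real"
  assumes "a \<le> b" "\<And>x. a \<le> x \<Longrightarrow> f x = 0"
  shows "f integrable_on {b..} \<and> integral {b..} f = 0"
proof -
  have "(f has_integral 0) {b..}" using assms by (intro has_integral_is_0) auto
  then show ?thesis by (auto simp: integral_unique)
qed

lemma lnderiv: "0 < 1 - e*x \<Longrightarrow> ((\<lambda>x. - ln (1 - e*x) - w x) has_real_derivative (e/(1-e*x) - (- g))) (at x within S)"
  if "(w has_real_derivative -g) (at x within S)" for e x :: real
  by (rule derivative_eq_intros refl that | simp add: field_simps)+

lemma fixed:
  fixes U w :: "real \<Rightarrow> real" and e :: real
  assumes U: "cutoff U" and e: "0 < e" "e \<le> 1/2" and w0: "w 0 = 0"
    and wd: "\<And>x. 0 \<le> x \<Longrightarrow> (w has_real_derivative - Gfun U e x) (at x within {0..})"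
  shows "mono_on {0..} w \<and> (\<forall>\<eta>>0. 0 \<le> w \<eta> \<and> w \<eta> \<le> 1) \<and> (w \<longlongrightarrow> Lim at_top w) at_top
     \<and> 0 \<le> Lim at_top w \<and> Lim at_top w \<le> 2 * sqrt e
     \<and> (\<lambda>\<eta>. (exp (- w \<eta>) - exp (- Lim at_top w))\<^sup>2) integrable_on {0..}
     \<and> integral {0..} (\<lambda>\<eta>. (exp (- w \<eta>) - exp (- Lim at_top w))\<^sup>2) \<le> 10
     \<and> (\<lambda>\<eta>. (Gfun U e \<eta>)\<^sup>2) integrable_on {0..}
     \<and> integral {0..} (\<lambda>\<eta>. (Gfun U e \<eta>)\<^sup>2) \<le> 10
     \<and> (\<forall>\<eta>\<ge>0. (\<lambda>y. (Gfun U e y)\<^sup>2) integrable_on {\<eta>..})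
     \<and> (\<lambda>\<eta>. integral {\<eta>..} (\<lambda>y. (Gfun U e y)\<^sup>2)) integrable_on {0..}
     \<and> integral {0..} (\<lambda>\<eta>. integral {\<eta>..} (\<lambda>y. (Gfun U e y)\<^sup>2)) \<le> 10"
proof -
  define s where "s = sqrt e"
  define a where "a = 3 / (4 * s)"
  have s0: "0 < s" using e by (simp add: s_def)
  have ss: "s * s = e" using e by (simp add: s_def)
  have s1: "s \<le> 4/5"
  proof (rule ccontr)
    assume "\<not> s \<le> 4/5"
    then have "16/25 < s * s" using mult_strict_mono[of "4/5" s "4/5" s] by auto
    then show False using ss e by simp
  qed
  have a0: "0 < a" using s0 by (simp add: a_def)
  have sa: "s * a = 3/4" using s0 by (simp add: a_def)
  have ea: "e * a = 3 * s / 4" using sa ss by (metis mult.assoc mult.commute times_divide_eq_right mult_1_right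
      divide_self_if) 
  have Uc: "continuous_on {0..} U"
  proof -
    obtain D where D: "\<forall>x\<in>{0..}. D 0 x = U x"
      "\<forall>k. \<forall>x\<in>{0..}. (D k has_real_derivative D (Suc k) x) (at x within {0..})"
      using U unfolding cutoff_def smooth_within_def by blast
    have "continuous_on {0..} (D 0)"
      unfolding continuous_on_eq_continuous_within
      using D(2) DERIV_continuous by blast
    then show ?thesis using D(1) continuous_on_eq by blast
  qed
  have U01: "\<And>z. 0 \<le> z \<Longrightarrow> 0 \<le> U z \<and> U z \<le> 1" using U unfolding cutoff_def by blast
  have Uz: "\<And>z. 3/4 \<le> z \<Longrightarrow> U z = 0" using U unfolding cutoff_def by blast
  have Gz: "\<And>y. a \<le> y \<Longrightarrow> Gfun U e y = 0"
  proof -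
    fix y assume "a \<le> y"
    then have "3/4 \<le> s * y" using sa s0 by (metis mult_left_mono less_imp_le)
    then show "Gfun U e y = 0" using Uz by (simp add: Gfun_def s_def)
  qed
  have den: "\<And>y. 0 \<le> y \<Longrightarrow> y \<le> a \<Longrightarrow> 2/5 \<le> 1 - e * y"
  proof -
    fix y assume "0 \<le> y" "y \<le> a"
    then have "e * y \<le> e * a" using e by (simp add: mult_left_mono)
    then show "2/5 \<le> 1 - e * y" using ea s1 by simp
  qed
  have Gnn: "\<And>y. 0 \<le> y \<Longrightarrow> 0 \<le> - Gfun U e y"
  proof -
    fix y :: real assume y: "0 \<le> y"
    show "0 \<le> - Gfun U e y"
    proof (cases "y \<le> a")
      case True
      then have "0 < 1 - e * y" using den y by fastforce
      moreover have "0 \<le> U (sqrt e * y)" using U01[of "sqrt e * y"] y e by simp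
      ultimately show ?thesis using e by (simp add: Gfun_def)
    qed (use Gz in auto)
  qed
  have Gle: "\<And>y. 0 \<le> y \<Longrightarrow> y \<le> a \<Longrightarrow> - Gfun U e y \<le> e / (1 - e * y)"
  proof -
    fix y :: real assume y: "0 \<le> y" "y \<le> a"
    then have d: "0 < 1 - e * y" using den by fastforce
    have "e * U (sqrt e * y) \<le> e" using U01[of "sqrt e * y"] y e by simp
    then show "- Gfun U e y \<le> e / (1 - e * y)"
      using d by (simp add: Gfun_def divide_right_mono)
  qed
  have Gsq: "\<And>y. 0 \<le> y \<Longrightarrow> (Gfun U e y)\<^sup>2 \<le> 7 * e\<^sup>2"
  proof -
    fix y :: real assume y: "0 \<le> y"
    show "(Gfun U e y)\<^sup>2 \<le> 7 * e\<^sup>2"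
    proof (cases "y \<le> a")
      case True
      have d: "2/5 \<le> 1 - e * y" using den y True by blast
      have "e / (1 - e * y) \<le> 5/2 * e" using d e using divide_left_mono[of "2/5" "1 - e*y" e] by auto
      then have "- Gfun U e y \<le> 5/2 * e" using Gle[OF y True] by (smt (verit))
      moreover have "0 \<le> - Gfun U e y" using Gnn y by blast
      ultimately have "(- Gfun U e y)\<^sup>2 \<le> (5/2 * e)\<^sup>2" by (intro power_mono) auto
      then have "(Gfun U e y)\<^sup>2 \<le> 25/4 * e\<^sup>2" by (simp add: power2_eq_square)
      then show ?thesis using zero_le_power2[of e] by linarith
    qed (use Gz e in auto)
  qed
  have incr: "\<And>x y. 0 \<le> x \<Longrightarrow> x \<le> y \<Longrightarrow> w x \<le> w y"
  proof -
    fix x y :: real assume xy: "0 \<le> x" "x \<le> y"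
    show "w x \<le> w y"
    proof (rule deriv_incr[OF xy(2)])
      fix t assume "x \<le> t" "t \<le> y"
      then show "(w has_real_derivative - Gfun U e t) (at t within {x..y})"
        using wd[of t] xy by (auto intro: DERIV_subset)
    next
      fix t assume "x < t" "t < y" then show "0 \<le> - Gfun U e t" using Gnn xy by simp
    qed
  qed
  have const: "\<And>y. a \<le> y \<Longrightarrow> w y = w a"
  proof -
    fix y assume ay: "a \<le> y"
    have "(\<lambda>t. - w t) a \<le> (\<lambda>t. - w t) y"
    proof (rule deriv_incr[OF ay])
      fix t assume "a \<le> t" "t \<le> y"
      then have "(w has_real_derivative - Gfun U e t) (at t within {a..y})"
        using wd[of t] a0 by (auto intro: DERIV_subset)
      then show "((\<lambda>t. - w t) has_real_derivative - (- Gfun U e t)) (at t within {a..y})"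
        by (rule DERIV_minus)
    next
      fix t assume "a < t" "t < y" then show "0 \<le> - (- Gfun U e t)" using Gz by simp
    qed
    then show "w y = w a" using incr[OF less_imp_le[OF a0] ay] by simp
  qed
  have lnb: "w a \<le> - ln (1 - e * a)"
  proof -
    have "(\<lambda>x. - ln (1 - e*x) - w x) 0 \<le> (\<lambda>x. - ln (1 - e*x) - w x) a"
    proof (rule deriv_incr[OF less_imp_le[OF a0]])
      fix x assume x: "0 \<le> x" "x \<le> a"
      then have d: "0 < 1 - e * x" using den by fastforce
      have "(w has_real_derivative - Gfun U e x) (at x within {0..a})"
        using wd[of x] x by (auto intro: DERIV_subset)
      then show "((\<lambda>x. - ln (1 - e*x) - w x) has_real_derivative (e/(1-e*x) - (- Gfun U e x))) (at x within {0..a})"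
        using d by (rule lnderiv)
    next
      fix x assume "0 < x" "x < a"
      then show "0 \<le> e/(1-e*x) - (- Gfun U e x)" using Gle[of x] by simp
    qed
    then show ?thesis using w0 by simp
  qed
  have ea2: "2/5 \<le> 1 - e * a" using ea s1 by simp
  have wa1: "w a \<le> 1"
  proof -
    have "exp (1::real) \<ge> 5/2" using exp_lower_Taylor_quadratic[of 1] by simp
    then have "exp (-1::real) \<le> 2/5" by (simp add: exp_minus field_simps)
    then have "exp (-1) \<le> 1 - e * a" using ea2 by simp
    then have "ln (exp (-1)) \<le> ln (1 - e * a)" using ea2 by (subst ln_le_cancel_iff) auto
    then show ?thesis using lnb by simp
  qed
  have wa2: "w a \<le> 2 * s"
  proof -
    have p: "0 < 1 - e * a" using ea2 by simp
    have "ln (1 / (1 - e*a)) \<le> 1 / (1 - e*a) - 1" using p by (intro ln_le_minus_one) simp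
    then have "- ln (1 - e*a) \<le> (e*a) / (1 - e*a)" using p by (simp add: ln_div field_simps)
    also have "\<dots> \<le> (e*a) / (2/5)" using ea2 ea s0 by (intro divide_left_mono) auto
    also have "\<dots> \<le> 2 * s" using ea s0 by simp
    finally show ?thesis using lnb by simp
  qed
  have w0a: "0 \<le> w a" using incr[of 0 a] a0 w0 by simp
  have lim: "(w \<longlongrightarrow> w a) at_top"
    by (rule tendsto_eventually) (unfold eventually_at_top_linorder, use const in blast)
  have L: "Lim at_top w = w a" by (rule tendsto_Lim[OF _ lim]) simp
  have wcont: "continuous_on {0..} w"
    unfolding continuous_on_eq_continuous_within using wd DERIV_continuous by fastforce
  have Gcont: "continuous_on {0..a} (Gfun U e)"
  proof -
    have "continuous_on {0..a} (\<lambda>y. U (sqrt e * y))"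
      by (rule continuous_on_compose2[OF Uc]) (use e in \<open>auto intro!: continuous_intros\<close>)
    then show ?thesis unfolding Gfun_def using den
      by (intro continuous_intros) force+
  qed
  have G2int: "\<And>b. 0 \<le> b \<Longrightarrow> b \<le> a \<Longrightarrow> (\<lambda>y. (Gfun U e y)\<^sup>2) integrable_on {b..a}"
    by (rule integrable_continuous_interval, rule continuous_on_subset[of "{0..a}"])
       (auto intro!: continuous_intros Gcont)
  have T4: "(\<lambda>y. (Gfun U e y)\<^sup>2) integrable_on {0..} \<and>
     integral {0..} (\<lambda>y. (Gfun U e y)\<^sup>2) = integral {0..a} (\<lambda>y. (Gfun U e y)\<^sup>2)"
    by (rule tail) (use a0 G2int Gz in auto)
  have I4: "integral {0..a} (\<lambda>y. (Gfun U e y)\<^sup>2) \<le> 10"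
  proof -
    have "integral {0..a} (\<lambda>y. (Gfun U e y)\<^sup>2) \<le> integral {0..a} (\<lambda>y. 7 * e\<^sup>2)"
      by (rule integral_le) (use G2int a0 Gsq in auto)
    also have "\<dots> = 7 * e * (e * a)" using a0 by (simp add: power2_eq_square)
    also have "\<dots> \<le> 10" using mult_mono[of e "1/2" "e*a" "3/5"] ea e s1 s0 by (auto simp: algebra_simps)
    finally show ?thesis .
  qed
  define F where "F = (\<lambda>\<eta>. (exp (- w \<eta>) - exp (- w a))\<^sup>2)"
  have Fb: "\<And>\<eta>. 0 \<le> \<eta> \<Longrightarrow> \<eta> \<le> a \<Longrightarrow> F \<eta> \<le> 4 * e"
  proof -
    fix \<eta> assume h: "0 \<le> \<eta>" "\<eta> \<le> a"
    have w1: "0 \<le> w \<eta>" using incr[of 0 \<eta>] h w0 by simp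
    have w2: "w \<eta> \<le> w a" using incr h by simp
    define d where "d = w a - w \<eta>"
    have d0: "0 \<le> d" using w2 by (simp add: d_def)
    have ex: "exp (- w a) = exp (- w \<eta>) * exp (- d)" by (simp add: d_def flip: exp_add)
    have e1: "1 - d \<le> exp (- d)" using exp_ge_add_one_self[of "-d"] by simp
    have e2: "exp (- w \<eta>) \<le> 1" using w1 by simp
    have e3: "exp (- d) \<le> 1" using d0 by simp
    have pe: "0 < exp (- w \<eta>)" by simp
    have X1: "0 \<le> exp (- w \<eta>) - exp (- w a)" using ex e3 pe by (simp add: mult_left_le)
    have X2: "exp (- w \<eta>) - exp (- w a) \<le> d"
    proof -
      have "exp (- w \<eta>) - exp (- w a) = exp (- w \<eta>) * (1 - exp (- d))" using ex by (simp add: algebra_simps)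
      also have "\<dots> \<le> 1 * d" using e1 e2 e3 pe by (intro mult_mono) auto
      finally show ?thesis by simp
    qed
    have "d \<le> 2 * s" using wa2 w1 by (simp add: d_def)
    then have "(exp (- w \<eta>) - exp (- w a))\<^sup>2 \<le> (2 * s)\<^sup>2" using X1 X2 by (intro power_mono) auto
    then show "F \<eta> \<le> 4 * e" using ss by (simp add: F_def power2_eq_square)
  qed
  have Fint: "F integrable_on {0..a}"
    unfolding F_def
    by (rule integrable_continuous_interval, rule continuous_on_subset[of "{0..}"])
       (auto intro!: continuous_intros wcont)
  have T3: "F integrable_on {0..} \<and> integral {0..} F = integral {0..a} F"
  proof (rule tail)
    fix x assume "a \<le> x"
    then have "w x = w a" by (rule const)
    then show "F x = 0" by (simp add: F_def)
  qed (use a0 Fint in auto)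
  have I3: "integral {0..a} F \<le> 10"
  proof -
    have "integral {0..a} F \<le> integral {0..a} (\<lambda>y. 4 * e)"
      by (rule integral_le) (use Fint a0 Fb in auto)
    also have "\<dots> = 4 * (e * a)" using a0 by simp
    also have "\<dots> \<le> 10" using ea s1 by (simp add: mult.commute)
    finally show ?thesis .
  qed
  define I where "I = (\<lambda>\<eta>. integral {\<eta>..} (\<lambda>y. (Gfun U e y)\<^sup>2))"
  have T5a: "\<And>\<eta>. 0 \<le> \<eta> \<Longrightarrow> \<eta> \<le> a \<Longrightarrow> (\<lambda>y. (Gfun U e y)\<^sup>2) integrable_on {\<eta>..} \<and>
       I \<eta> = integral {\<eta>..a} (\<lambda>y. (Gfun U e y)\<^sup>2)"
    unfolding I_def by (rule tail) (use G2int Gz in auto)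
  have T5b: "\<And>\<eta>. a \<le> \<eta> \<Longrightarrow> (\<lambda>y. (Gfun U e y)\<^sup>2) integrable_on {\<eta>..} \<and> I \<eta> = 0"
    unfolding I_def by (rule tail0) (use Gz in auto)
  have int5: "\<forall>\<eta>\<ge>0. (\<lambda>y. (Gfun U e y)\<^sup>2) integrable_on {\<eta>..}"
    using T5a T5b by (meson linear)
  have Iint: "I integrable_on {0..a}"
  proof -
    have "continuous_on {0..a} (\<lambda>\<eta>. integral {\<eta>..a} (\<lambda>y. (Gfun U e y)\<^sup>2))"
      by (rule indefinite_integral_continuous_1') (use G2int a0 in auto)
    then have "(\<lambda>\<eta>. integral {\<eta>..a} (\<lambda>y. (Gfun U e y)\<^sup>2)) integrable_on {0..a}"
      by (rule integrable_continuous_interval)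
    then show ?thesis by (rule integrable_eq) (use T5a in auto)
  qed
  have T5: "I integrable_on {0..} \<and> integral {0..} I = integral {0..a} I"
    by (rule tail) (use a0 Iint T5b in auto)
  have Ib: "\<And>\<eta>. 0 \<le> \<eta> \<Longrightarrow> \<eta> \<le> a \<Longrightarrow> I \<eta> \<le> 7 * e\<^sup>2 * a"
  proof -
    fix \<eta> assume h: "0 \<le> \<eta>" "\<eta> \<le> a"
    have "I \<eta> = integral {\<eta>..a} (\<lambda>y. (Gfun U e y)\<^sup>2)" using T5a h by blast
    also have "\<dots> \<le> integral {\<eta>..a} (\<lambda>y. 7 * e\<^sup>2)"
      by (rule integral_le) (use G2int h Gsq in auto)
    also have "\<dots> = (a - \<eta>) * (7 * e\<^sup>2)" using h by simp
    also have "\<dots> \<le> a * (7 * e\<^sup>2)" using h e by (intro mult_right_mono) auto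
    finally show "I \<eta> \<le> 7 * e\<^sup>2 * a" by (simp add: mult.commute)
  qed
  have I5: "integral {0..a} I \<le> 10"
  proof -
    have "integral {0..a} I \<le> integral {0..a} (\<lambda>y. 7 * e\<^sup>2 * a)"
      by (rule integral_le) (use Iint a0 Ib in auto)
    also have "\<dots> = 7 * (e * a) * (e * a)" using a0 by (simp add: power2_eq_square)
    also have "\<dots> \<le> 10"
    proof -
      have h1: "e * a \<le> 3/5" "0 \<le> e * a" using ea s1 s0 by auto
      have "(e * a) * (e * a) \<le> (3/5) * (3/5)" by (rule mult_mono) (use h1 in auto)
      then show ?thesis by (simp add: mult.assoc)
    qed
    finally show ?thesis .
  qed
  have mono: "mono_on {0..} w" by (rule mono_onI) (use incr in auto)
  have bnd: "\<forall>\<eta>>0. 0 \<le> w \<eta> \<and> w \<eta> \<le> 1"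
  proof (intro allI impI)
    fix \<eta> :: real assume h: "0 < \<eta>"
    have "0 \<le> w \<eta>" using incr[of 0 \<eta>] h w0 by simp
    moreover have "w \<eta> \<le> 1"
    proof (cases "\<eta> \<le> a")
      case True then show ?thesis using incr[of \<eta> a] h wa1 by simp
    next
      case False
      then have "w \<eta> = w a" by (intro const) simp
      then show ?thesis using wa1 by simp
    qed
    ultimately show "0 \<le> w \<eta> \<and> w \<eta> \<le> 1" by blast
  qed
  show ?thesis
    unfolding L using mono bnd lim w0a wa2 T3 I3 T4 I4 int5 T5 I5
    unfolding F_def I_def s_def by auto
qed

theorem lemma4p1:
  fixes U :: "real \<Rightarrow> real" and W :: "real \<Rightarrow> real \<Rightarrow> real"
  assumes U: "cutoff U"
    and W0: "\<And>\<epsilon>. 0 < \<epsilon> \<Longrightarrow> \<epsilon> \<le> 1/2 \<Longrightarrow> W \<epsilon> 0 = 0"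
    and Wderiv: "\<And>\<epsilon> \<eta>. 0 < \<epsilon> \<Longrightarrow> \<epsilon> \<le> 1/2 \<Longrightarrow> 0 \<le> \<eta> \<Longrightarrow>
        (W \<epsilon> has_real_derivative - Gfun U \<epsilon> \<eta>) (at \<eta> within {0..})"
  shows
    "(\<forall>\<epsilon>. 0 < \<epsilon> \<and> \<epsilon> \<le> 1/2 \<longrightarrow>
        mono_on {0..} (W \<epsilon>) \<and> (\<forall>\<eta>>0. 0 \<le> W \<epsilon> \<eta> \<and> W \<epsilon> \<eta> \<le> 1) \<and>
        (W \<epsilon> \<longlongrightarrow> Winf W \<epsilon>) at_top)
   \<and> (Winf W \<longlongrightarrow> 0) (at_right 0)
   \<and> (\<exists>C. \<forall>\<epsilon>. 0 < \<epsilon> \<and> \<epsilon> \<le> 1/2 \<longrightarrow>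
        (\<lambda>\<eta>. (exp (- W \<epsilon> \<eta>) - exp (- Winf W \<epsilon>))\<^sup>2) integrable_on {0..} \<and>
        integral {0..} (\<lambda>\<eta>. (exp (- W \<epsilon> \<eta>) - exp (- Winf W \<epsilon>))\<^sup>2) \<le> C \<and>
        (\<lambda>\<eta>. (Gfun U \<epsilon> \<eta>)\<^sup>2) integrable_on {0..} \<and>
        integral {0..} (\<lambda>\<eta>. (Gfun U \<epsilon> \<eta>)\<^sup>2) \<le> C \<and>
        (\<forall>\<eta>\<ge>0. (\<lambda>y. (Gfun U \<epsilon> y)\<^sup>2) integrable_on {\<eta>..}) \<and>
        (\<lambda>\<eta>. integral {\<eta>..} (\<lambda>y. (Gfun U \<epsilon> y)\<^sup>2)) integrable_on {0..} \<and>
        integral {0..} (\<lambda>\<eta>. integral {\<eta>..} (\<lambda>y. (Gfun U \<epsilon> y)\<^sup>2)) \<le> C)"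
proof -
  have F: "mono_on {0..} (W e) \<and> (\<forall>\<eta>>0. 0 \<le> W e \<eta> \<and> W e \<eta> \<le> 1) \<and> (W e \<longlongrightarrow> Winf W e) at_top
     \<and> 0 \<le> Winf W e \<and> Winf W e \<le> 2 * sqrt e
     \<and> (\<lambda>\<eta>. (exp (- W e \<eta>) - exp (- Winf W e))\<^sup>2) integrable_on {0..}
     \<and> integral {0..} (\<lambda>\<eta>. (exp (- W e \<eta>) - exp (- Winf W e))\<^sup>2) \<le> 10
     \<and> (\<lambda>\<eta>. (Gfun U e \<eta>)\<^sup>2) integrable_on {0..}
     \<and> integral {0..} (\<lambda>\<eta>. (Gfun U e \<eta>)\<^sup>2) \<le> 10
     \<and> (\<forall>\<eta>\<ge>0. (\<lambda>y. (Gfun U e y)\<^sup>2) integrable_on {\<eta>..})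
     \<and> (\<lambda>\<eta>. integral {\<eta>..} (\<lambda>y. (Gfun U e y)\<^sup>2)) integrable_on {0..}
     \<and> integral {0..} (\<lambda>\<eta>. integral {\<eta>..} (\<lambda>y. (Gfun U e y)\<^sup>2)) \<le> 10"
    if "0 < e" "e \<le> 1/2" for e
    unfolding Winf_def by (rule fixed[OF U that W0[OF that] Wderiv[OF that]])
  have P1: "\<forall>\<epsilon>. 0 < \<epsilon> \<and> \<epsilon> \<le> 1/2 \<longrightarrow>
        mono_on {0..} (W \<epsilon>) \<and> (\<forall>\<eta>>0. 0 \<le> W \<epsilon> \<eta> \<and> W \<epsilon> \<eta> \<le> 1) \<and>
        (W \<epsilon> \<longlongrightarrow> Winf W \<epsilon>) at_top"
    using F by blast
  have ev: "eventually (\<lambda>e. 0 < e \<and> e \<le> (1/2::real)) (at_right 0)"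
    by (rule eventually_mono[OF eventually_at_right_real[of 0 "1/2"]]) auto
  have P2: "(Winf W \<longlongrightarrow> 0) (at_right 0)"
  proof (rule tendsto_sandwich[of "\<lambda>_. 0" _ _ "\<lambda>e. 2 * sqrt e"])
    show "eventually (\<lambda>e. 0 \<le> Winf W e) (at_right 0)"
      using ev by eventually_elim (use F in blast)
    show "eventually (\<lambda>e. Winf W e \<le> 2 * sqrt e) (at_right 0)"
      using ev by eventually_elim (use F in blast)
    show "((\<lambda>_. 0) \<longlongrightarrow> (0::real)) (at_right 0)" by simp
    have "((\<lambda>e. 2 * sqrt e) \<longlongrightarrow> 2 * sqrt 0) (at_right (0::real))"
      by (intro tendsto_intros)
    then show "((\<lambda>e. 2 * sqrt e) \<longlongrightarrow> (0::real)) (at_right 0)" by simp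
  qed
  have P3: "\<exists>C. \<forall>\<epsilon>. 0 < \<epsilon> \<and> \<epsilon> \<le> 1/2 \<longrightarrow>
        (\<lambda>\<eta>. (exp (- W \<epsilon> \<eta>) - exp (- Winf W \<epsilon>))\<^sup>2) integrable_on {0..} \<and>
        integral {0..} (\<lambda>\<eta>. (exp (- W \<epsilon> \<eta>) - exp (- Winf W \<epsilon>))\<^sup>2) \<le> C \<and>
        (\<lambda>\<eta>. (Gfun U \<epsilon> \<eta>)\<^sup>2) integrable_on {0..} \<and>
        integral {0..} (\<lambda>\<eta>. (Gfun U \<epsilon> \<eta>)\<^sup>2) \<le> C \<and>
        (\<forall>\<eta>\<ge>0. (\<lambda>y. (Gfun U \<epsilon> y)\<^sup>2) integrable_on {\<eta>..}) \<and>
        (\<lambda>\<eta>. integral {\<eta>..} (\<lambda>y. (Gfun U \<epsilon> y)\<^sup>2)) integrable_on {0..} \<and>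
        integral {0..} (\<lambda>\<eta>. integral {\<eta>..} (\<lambda>y. (Gfun U \<epsilon> y)\<^sup>2)) \<le> C"
    by (rule exI[of _ 10]) (use F in blast)
  show ?thesis using P1 P2 P3 by blast
qed

end
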